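(* Let $L\subset\mathbb{Z}^m$ be a non-zero lattice with $L\cap\mathbb{N}^m=\{\mathbf 0\}$ and $\mathrm{Sat}(L)=\ker_{\mathbb{Z}}(\mathcal{A})$. If $\mathrm{rad}(I_L)=\mathrm{rad}(F_1,\ldots,F_s)$ for some $\mathcal{A}$-homogeneous polynomials $F_1,\ldots,F_s\in I_L$, then $\bigcup_{i=1}^s\Gamma_L(F_i)$ is a spanning subcomplex of $\Gamma_L$, and each $\Gamma_L(F_i)$ is a simplex of $\Gamma_L$.
   Context: $K$ is a field, $\mathbf x^{\mathbf u}=x_1^{u_1}\cdots x_m^{u_m}$, $\mathbf u_\pm$ the positive/negative parts of $\mathbf u$, $I_L=(\mathbf x^{\mathbf u_+}-\mathbf x^{\mathbf u_-}:\mathbf u\in L)\subset K[x_1,\ldots,x_m]$, $\mathrm{Sat}(L)=\{\mathbf u:d\mathbf u\in L\text{ for some nonzero }d\in\mathbb{Z}\}$, $\mathcal{A}=\{\mathbf a_1,\ldots,\mathbf a_m\}\subset\mathbb{Z}^n$, $\ker_{\mathbb{Z}}(\mathcal{A})=\{\mathbf q:\sum q_i\mathbf a_i=0\}$. The $\mathcal{A}$-degree of $\mathbf x^{\mathbf u}$ is $\sum u_i\mathbf a_i$; a polynomial is $\mathcal{A}$-homogeneous if all its monomials have equal $\mathcal{A}$-degree. A monomial $M$ is indispensable of $I_L$ if every system of binomial generators contains a binomial having $M$ as a monomial. $\mathcal{T}_{\min}$: inclusion-minimal supports of indispensable monomials ($\mathrm{supp}(\mathbf x^{\mathbf w})=\{i:w_i\ne0\}$).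 $\Gamma_L$: simplicial complex on $\mathcal{T}_{\min}$, with $\{E_1,\ldots,E_k\}$ a face iff there are monomials $M_i$, $\mathrm{supp}(M_i)=E_i$, of equal $\mathcal{A}$-degree. $\Gamma_L(F)$: induced subcomplex on those $E\in\mathcal{T}_{\min}$ equal to the support of some monomial occurring in $F$. Spanning subcomplex: one with the same vertex set as $\Gamma_L$. *)

theory Defs
  imports Main "HOL-Library.Poly_Mapping"
begin

text \<open>Variables x_i are indexed by a finite type 'n (so m = CARD('n)); the ambient
  space Z^n of the configuration A is indexed by a finite type 'd.
  A monomial x^w is identified with its exponent vector w (a finitely supported map 'n to nat);
  a polynomial over K is a finitely supported map from exponents to K.\<close>

type_synonym ('n, 'k) mpoly = "('n \<Rightarrow>\<^sub>0 nat) \<Rightarrow>\<^sub>0 'k"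

definition mono :: "('n \<Rightarrow>\<^sub>0 nat) \<Rightarrow> ('n, 'k::comm_ring_1) mpoly" where
  "mono w = Poly_Mapping.single w 1"

definition posp :: "('n::finite \<Rightarrow> int) \<Rightarrow> ('n \<Rightarrow>\<^sub>0 nat)" where
  "posp u = Abs_poly_mapping (\<lambda>i. nat (u i))"

definition negp :: "('n::finite \<Rightarrow> int) \<Rightarrow> ('n \<Rightarrow>\<^sub>0 nat)" where
  "negp u = Abs_poly_mapping (\<lambda>i. nat (- u i))"

definition is_lattice :: "('n \<Rightarrow> int) set \<Rightarrow> bool" where
  "is_lattice L \<longleftrightarrow> (\<lambda>_. 0) \<in> L \<and> (\<forall>u\<in>L. \<forall>v\<in>L. (\<lambda>i. u i - v i) \<in> L)"

definition Sat :: "('n \<Rightarrow> int) set \<Rightarrow> ('n \<Rightarrow> int) set" where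
  "Sat L = {u. \<exists>d::int. d \<noteq> 0 \<and> (\<lambda>i. d * u i) \<in> L}"

definition kerA :: "('n::finite \<Rightarrow> 'd \<Rightarrow> int) \<Rightarrow> ('n \<Rightarrow> int) set" where
  "kerA a = {q. (\<lambda>j. \<Sum>i\<in>UNIV. q i * a i j) = (\<lambda>_. 0)}"

definition gen_ideal :: "'r::comm_ring_1 set \<Rightarrow> 'r set" where
  "gen_ideal S = {f. \<exists>T c. finite T \<and> T \<subseteq> S \<and> f = (\<Sum>t\<in>T. c t * t)}"

definition rad :: "'r::comm_ring_1 set \<Rightarrow> 'r set" where
  "rad I = {f. \<exists>n. f ^ n \<in> I}"

definition lattice_ideal :: "('n::finite \<Rightarrow> int) set \<Rightarrow> ('n, 'k::comm_ring_1) mpoly set" where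
  "lattice_ideal L = gen_ideal {mono (posp u) - mono (negp u) | u. u \<in> L}"

definition Adeg :: "('n::finite \<Rightarrow> 'd \<Rightarrow> int) \<Rightarrow> ('n \<Rightarrow>\<^sub>0 nat) \<Rightarrow> ('d \<Rightarrow> int)" where
  "Adeg a w = (\<lambda>j. \<Sum>i\<in>UNIV. int (Poly_Mapping.lookup w i) * a i j)"

definition A_homogeneous :: "('n::finite \<Rightarrow> 'd \<Rightarrow> int) \<Rightarrow> ('n, 'k::comm_ring_1) mpoly \<Rightarrow> bool" where
  "A_homogeneous a F \<longleftrightarrow> (\<forall>u\<in>Poly_Mapping.keys F. \<forall>v\<in>Poly_Mapping.keys F. Adeg a u = Adeg a v)"

definition is_binomial :: "('n, 'k::comm_ring_1) mpoly \<Rightarrow> bool" where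
  "is_binomial f \<longleftrightarrow> (\<exists>u v. u \<noteq> v \<and> f = mono u - mono v)"

definition indispensable_monomial ::
  "('n, 'k::comm_ring_1) mpoly set \<Rightarrow> ('n \<Rightarrow>\<^sub>0 nat) \<Rightarrow> bool" where
  "indispensable_monomial I w \<longleftrightarrow>
     (\<forall>G. (\<forall>g\<in>G. is_binomial g) \<and> gen_ideal G = I \<longrightarrow> (\<exists>g\<in>G. w \<in> Poly_Mapping.keys g))"

definition Tmin :: "('n, 'k::comm_ring_1) mpoly set \<Rightarrow> 'n set set" where
  "Tmin I = {E. (\<exists>w. indispensable_monomial I w \<and> Poly_Mapping.keys w = E) \<and>
               \<not> (\<exists>w'. indispensable_monomial I w' \<and> Poly_Mapping.keys w' \<subset> E)}"

text \<open>The simplicial complex Gamma_L, as its set of faces (each a set of vertices).\<close>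
definition Gamma :: "('n::finite \<Rightarrow> 'd \<Rightarrow> int) \<Rightarrow> ('n \<Rightarrow> int) set \<Rightarrow> 'k::comm_ring_1 itself \<Rightarrow> 'n set set set" where
  "Gamma a L _ = {S. S \<subseteq> Tmin (lattice_ideal L :: ('n, 'k) mpoly set) \<and>
       (\<exists>M d. \<forall>E\<in>S. Poly_Mapping.keys (M E) = E \<and> Adeg a (M E) = d)}"

definition vert_of :: "('n::finite \<Rightarrow> int) set \<Rightarrow> ('n, 'k::comm_ring_1) mpoly \<Rightarrow> 'n set set" where
  "vert_of L F = {E \<in> Tmin (lattice_ideal L :: ('n, 'k) mpoly set). \<exists>w\<in>Poly_Mapping.keys F. Poly_Mapping.keys w = E}"

definition Gamma_F :: "('n::finite \<Rightarrow> 'd \<Rightarrow> int) \<Rightarrow> ('n \<Rightarrow> int) set \<Rightarrow> ('n, 'k::comm_ring_1) mpoly \<Rightarrow> 'n set set set" where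
  "Gamma_F a L F = {S \<in> Gamma a L TYPE('k). S \<subseteq> vert_of L F}"

end

theory Submission
  imports Defs
begin

definition ev :: "('a::comm_monoid_add \<Rightarrow> 'k) \<Rightarrow> ('a \<Rightarrow>\<^sub>0 'k) \<Rightarrow> 'k::comm_ring_1" where
  "ev \<chi> f = (\<Sum>k\<in>Poly_Mapping.keys f. Poly_Mapping.lookup f k * \<chi> k)"

lemma ev_add: "ev \<chi> (f + g) = ev \<chi> f + ev \<chi> g"
  unfolding ev_def
  by (rule setsum_keys_plus_distrib[where f="\<lambda>k c. c * \<chi> k"]) (auto simp: distrib_right)

lemma ev_zero[simp]: "ev \<chi> 0 = 0"
  by (simp add: ev_def)

lemma ev_single: "ev \<chi> (Poly_Mapping.single k c) = c * \<chi> k"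
  by (simp add: ev_def)

lemma ev_uminus: "ev \<chi> (- f) = - ev \<chi> f"
proof -
  have "ev \<chi> (f + - f) = ev \<chi> f + ev \<chi> (- f)" by (rule ev_add)
  then have h: "ev \<chi> f + ev \<chi> (- f) = 0" by simp
  show ?thesis using minus_unique[OF h] by simp
qed

lemma ev_diff: "ev \<chi> (f - g) = ev \<chi> f - ev \<chi> g"
  by (simp only: diff_conv_add_uminus ev_add ev_uminus)

lemma update_single_add:
  assumes "a \<notin> Poly_Mapping.keys f"
  shows "Poly_Mapping.update a b f = Poly_Mapping.single a b + f"
  using assms
  by (intro poly_mapping_eqI) (auto simp: lookup_update lookup_add lookup_single in_keys_iff when_def)

lemma ev_mult_single:
  assumes mult: "\<And>x y. \<chi> (x + y) = \<chi> x * \<chi> y"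
  shows "ev \<chi> (Poly_Mapping.single a b * g) = b * \<chi> a * ev \<chi> g"
proof (induction g rule: update_induct)
  case const
  then show ?case by simp
next
  case (update g c d)
  have u: "Poly_Mapping.update c d g = Poly_Mapping.single c d + g"
    using update(1) by (rule update_single_add)
  have "Poly_Mapping.single a b * Poly_Mapping.update c d g
      = Poly_Mapping.single (a + c) (b * d) + Poly_Mapping.single a b * g"
    unfolding u by (simp only: distrib_left mult_single)
  then have "ev \<chi> (Poly_Mapping.single a b * Poly_Mapping.update c d g)
     = b * d * (\<chi> a * \<chi> c) + b * \<chi> a * ev \<chi> g"
    using update(3) by (simp only: ev_add ev_single mult)
  also have "\<dots> = b * \<chi> a * (d * \<chi> c + ev \<chi> g)" by (simp add: distrib_left mult_ac)
  also have "\<dots> = b * \<chi> a * ev \<chi> (Poly_Mapping.update c d g)"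
    unfolding u by (simp only: ev_add ev_single)
  finally show ?case .
qed

lemma ev_mult:
  assumes mult: "\<And>x y. \<chi> (x + y) = \<chi> x * \<chi> y"
  shows "ev \<chi> (f * g) = ev \<chi> f * ev \<chi> g"
proof (induction f rule: update_induct)
  case const
  then show ?case by simp
next
  case (update f c d)
  have u: "Poly_Mapping.update c d f = Poly_Mapping.single c d + f"
    using update(1) by (rule update_single_add)
  have "ev \<chi> (Poly_Mapping.update c d f * g) = d * \<chi> c * ev \<chi> g + ev \<chi> f * ev \<chi> g"
    unfolding u using update(3) by (simp only: distrib_right ev_add ev_mult_single[of \<chi>, OF mult])
  also have "\<dots> = (d * \<chi> c + ev \<chi> f) * ev \<chi> g" by (rule distrib_right[symmetric])
  also have "\<dots> = ev \<chi> (Poly_Mapping.update c d f) * ev \<chi> g"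
    unfolding u by (simp only: ev_add ev_single)
  finally show ?case .
qed

lemma ev_sum: "ev \<chi> (\<Sum>t\<in>T. f t) = (\<Sum>t\<in>T. ev \<chi> (f t))"
  proof (induction T rule: infinite_finite_induct)
  case (insert x F)
  then show ?case by (simp add: ev_add)
qed simp_all

lemma ev_one:
  assumes "\<chi> 0 = 1"
  shows "ev \<chi> 1 = 1"
  using ev_single[of \<chi> 0 1] assms by simp

lemma ev_power:
  assumes mult: "\<And>x y. \<chi> (x + y) = \<chi> x * \<chi> y" and "\<chi> 0 = 1"
  shows "ev \<chi> (f ^ n) = ev \<chi> f ^ n"
proof (induction n)
  case 0
  then show ?case using ev_one[of \<chi>, OF assms(2)] by simp
next
  case (Suc n)
  then show ?case by (simp only: power_Suc ev_mult[of \<chi>, OF mult])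
qed


lemma lookup_posp[simp]: "Poly_Mapping.lookup (posp u) i = nat (u i)"
  by (simp add: posp_def)

lemma lookup_negp[simp]: "Poly_Mapping.lookup (negp u) i = nat (- u i)"
  by (simp add: negp_def)

lemma negp_posp: "negp u = posp (\<lambda>i. 0 - u i)"
  by (intro poly_mapping_eqI) simp

lemma keys_add_nat: "Poly_Mapping.keys ((x::'a \<Rightarrow>\<^sub>0 nat) + y) = Poly_Mapping.keys x \<union> Poly_Mapping.keys y"
  by (auto simp: in_keys_iff lookup_add)

lemma keys_mono_diff: "Poly_Mapping.keys (mono x - mono y :: ('n, 'k::comm_ring_1) mpoly) \<subseteq> {x, y}"
  by (auto simp: in_keys_iff lookup_minus lookup_single when_def mono_def split: if_splits)

lemma lookup_mono_diff: "x \<noteq> y \<Longrightarrow> Poly_Mapping.lookup (mono x - mono y :: ('n, 'k::comm_ring_1) mpoly) x = 1"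
  by (simp add: mono_def lookup_minus lookup_single)

lemma posp_eq_negp: "posp u = negp u \<Longrightarrow> u = (\<lambda>_. 0)"
proof
  fix i assume "posp u = negp u"
  then have "Poly_Mapping.lookup (posp u) i = Poly_Mapping.lookup (negp u) i" by simp
  then show "u i = 0" by simp
qed

lemma posp_zero: "posp (\<lambda>_. 0) = negp (\<lambda>_. 0)"
  by (intro poly_mapping_eqI) simp

lemma in_gen_ideal: "s \<in> S \<Longrightarrow> s \<in> gen_ideal S"
  unfolding gen_ideal_def by (rule CollectI, rule exI[of _ "{s}"], rule exI[of _ "\<lambda>_. 1"]) simp

lemma gen_ideal_keys:
  assumes "\<forall>s\<in>S. Poly_Mapping.keys s \<subseteq> M" and "\<forall>m\<in>M. \<forall>c. m + c \<in> M"
    and "f \<in> gen_ideal S"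
  shows "Poly_Mapping.keys (f :: ('a::comm_monoid_add \<Rightarrow>\<^sub>0 'b::comm_ring_1)) \<subseteq> M"
proof -
  obtain T c where T: "finite T" "T \<subseteq> S" "f = (\<Sum>t\<in>T. c t * t)"
    using assms(3) unfolding gen_ideal_def by blast
  have "Poly_Mapping.keys f \<subseteq> (\<Union>t\<in>T. Poly_Mapping.keys (c t * t))"
    unfolding T(3) by (rule keys_sum)
  also have "\<dots> \<subseteq> M"
  proof
    fix x assume "x \<in> (\<Union>t\<in>T. Poly_Mapping.keys (c t * t))"
    then obtain t where t: "t \<in> T" "x \<in> Poly_Mapping.keys (c t * t)" by blast
    then obtain a b where ab: "x = a + b" "b \<in> Poly_Mapping.keys t"
      using keys_mult[of "c t" t] by blast
    have "b \<in> M" using ab(2) t(1) T(2) assms(1) by blast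
    then have "b + a \<in> M" using assms(2) by blast
    then show "x \<in> M" using ab(1) by (simp add: add.commute)
  qed
  finally show ?thesis .
qed

lemma gen_ideal_minus0: "gen_ideal (S - {0}) = gen_ideal (S :: 'r::comm_ring_1 set)"
proof
  show "gen_ideal (S - {0}) \<subseteq> gen_ideal S" unfolding gen_ideal_def by blast
next
  show "gen_ideal S \<subseteq> gen_ideal (S - {0})"
  proof
    fix f assume "f \<in> gen_ideal S"
    then obtain T c where T: "finite T" "T \<subseteq> S" "f = (\<Sum>t\<in>T. c t * t)"
      unfolding gen_ideal_def by blast
    have "f = (\<Sum>t\<in>T - {0}. c t * t)"
    proof (cases "0 \<in> T")
      case True
      then show ?thesis using T by (simp add: sum.remove)
    next
      case False
      then show ?thesis using T by simp
    qed
    then show "f \<in> gen_ideal (S - {0})" unfolding gen_ideal_def using T by blast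
  qed
qed

lemma ev_gen_ideal:
  assumes mult: "\<And>x y. \<chi> (x + y) = \<chi> x * \<chi> y"
    and "\<forall>s\<in>S. ev \<chi> s = 0" and "f \<in> gen_ideal S"
  shows "ev \<chi> f = 0"
proof -
  obtain T c where T: "finite T" "T \<subseteq> S" "f = (\<Sum>t\<in>T. c t * t)"
    using assms(3) unfolding gen_ideal_def by blast
  have "ev \<chi> f = (\<Sum>t\<in>T. ev \<chi> (c t) * ev \<chi> t)"
    unfolding T(3) by (simp only: ev_sum ev_mult[of \<chi>, OF mult])
  also have "\<dots> = 0" using T(2) assms(2) by (intro sum.neutral) auto
  finally show ?thesis .
qed

definition Mset :: "('n::finite \<Rightarrow> int) set \<Rightarrow> ('n \<Rightarrow>\<^sub>0 nat) set" where
  "Mset L = {m. \<exists>u\<in>L. u \<noteq> (\<lambda>_. 0) \<and> (\<exists>c. m = posp u + c)}"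

lemma lattice_neg:
  assumes "is_lattice L" "u \<in> L" shows "(\<lambda>i. 0 - u i) \<in> L"
proof -
  have "(\<lambda>_. 0) \<in> L" "\<forall>u\<in>L. \<forall>v\<in>L. (\<lambda>i. u i - v i) \<in> L" using assms(1) unfolding is_lattice_def by auto
  from bspec[OF bspec[OF this(2) this(1)] assms(2)] show ?thesis by simp
qed

lemma lattice_keys:
  assumes lat: "is_lattice L" and f: "f \<in> (lattice_ideal L :: ('n::finite, 'k::comm_ring_1) mpoly set)"
  shows "Poly_Mapping.keys f \<subseteq> Mset L"
proof (rule gen_ideal_keys[OF _ _ f[unfolded lattice_ideal_def]])
  show "\<forall>m\<in>Mset L. \<forall>c. m + c \<in> Mset L"
    unfolding Mset_def by (auto simp: add.assoc)
next
  show "\<forall>s\<in>{mono (posp u) - mono (negp u) :: ('n, 'k) mpoly |u. u \<in> L}. Poly_Mapping.keys s \<subseteq> Mset L"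
  proof (intro ballI subsetI)
    fix s x assume s: "s \<in> {mono (posp u) - mono (negp u) :: ('n, 'k) mpoly |u. u \<in> L}" and xs: "x \<in> Poly_Mapping.keys s"
    from s obtain u where u: "u \<in> L" and su: "s = mono (posp u) - mono (negp u)" by blast
    have x: "x \<in> Poly_Mapping.keys (mono (posp u) - mono (negp u) :: ('n, 'k) mpoly)" using xs su by simp
    show "x \<in> Mset L"
    proof (cases "u = (\<lambda>_. 0)")
      case True
      then show ?thesis using x posp_zero by (metis diff_self keys_zero empty_iff)
    next
      case False
      have "x = posp u \<or> x = negp u" using x keys_mono_diff by blast
      moreover have "posp u \<in> Mset L" using u False unfolding Mset_def
        by (intro CollectI bexI[of _ u]) (auto intro: exI[of _ 0])
      moreover have "negp u \<in> Mset L"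
      proof -
        have "(\<lambda>i. 0 - u i) \<noteq> (\<lambda>_. 0)"
        proof
          assume "(\<lambda>i. 0 - u i) = (\<lambda>_. (0::int))"
          then have "u = (\<lambda>_. 0)" by (metis diff_0 neg_equal_0_iff_equal)
          then show False using False by simp
        qed
        then show ?thesis using lattice_neg[OF lat u] unfolding Mset_def negp_posp
          by (intro CollectI bexI[of _ "\<lambda>i. 0 - u i"]) (auto intro: exI[of _ 0])
      qed
      ultimately show ?thesis by blast
    qed
  qed
qed

definition deg :: "('n::finite \<Rightarrow>\<^sub>0 nat) \<Rightarrow> nat" where
  "deg w = (\<Sum>i\<in>UNIV. Poly_Mapping.lookup w i)"

lemma deg_add: "deg (x + y) = deg x + deg y"
  by (simp add: deg_def lookup_add sum.distrib)

lemma deg_zero: "deg x = 0 \<Longrightarrow> x = 0"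
  by (intro poly_mapping_eqI) (simp add: deg_def)

lemma lemmaB:
  assumes lat: "is_lattice L" and u: "u \<in> L" "u \<noteq> (\<lambda>_. 0)"
  shows "\<exists>w. indispensable_monomial (lattice_ideal L :: ('n::finite, 'k::field) mpoly set) w \<and>
             (\<exists>c. posp u = w + c)"
proof -
  define D where "D = {w. \<exists>v\<in>L. v \<noteq> (\<lambda>_. 0) \<and> w = posp v \<and> (\<exists>c. posp u = w + c)}"
  have "posp u \<in> D" unfolding D_def using u by (auto intro: exI[of _ 0])
  then obtain w0 where w0: "w0 \<in> D" "\<forall>y. y \<in> D \<longrightarrow> deg w0 \<le> deg y"
    using ex_has_least_nat[of "\<lambda>w. w \<in> D" "posp u" deg] by blast
  then obtain v c where v: "v \<in> L" "v \<noteq> (\<lambda>_. 0)" "w0 = posp v" "posp u = w0 + c"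
    unfolding D_def by blast
  have "indispensable_monomial (lattice_ideal L :: ('n, 'k) mpoly set) w0"
    unfolding indispensable_monomial_def
  proof (intro allI impI)
    fix G :: "('n, 'k) mpoly set"
    assume G: "(\<forall>g\<in>G. is_binomial g) \<and> gen_ideal G = lattice_ideal L"
    define h :: "('n, 'k) mpoly" where "h = mono (posp v) - mono (negp v)"
    have "h \<in> lattice_ideal L" unfolding lattice_ideal_def h_def
      by (rule in_gen_ideal) (use v in blast)
    then have "h \<in> gen_ideal G" using G by simp
    then obtain T cc where T: "finite T" "T \<subseteq> G" "h = (\<Sum>t\<in>T. cc t * t)"
      unfolding gen_ideal_def by blast
    have pn: "posp v \<noteq> negp v" using v(2) posp_eq_negp by blast
    have "Poly_Mapping.lookup h w0 = 1" unfolding h_def v(3) using pn by (rule lookup_mono_diff)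
    then have "(\<Sum>t\<in>T. Poly_Mapping.lookup (cc t * t) w0) \<noteq> 0"
      using T(3) by (simp add: lookup_sum)
    then obtain t where t: "t \<in> T" "Poly_Mapping.lookup (cc t * t) w0 \<noteq> 0"
      by (meson sum.not_neutral_contains_not_neutral)
    then have "w0 \<in> Poly_Mapping.keys (cc t * t)" by (simp add: in_keys_iff)
    then obtain a b where ab: "w0 = a + b" "b \<in> Poly_Mapping.keys t"
      using keys_mult[of "cc t" t] by blast
    have tG: "t \<in> G" using t T by blast
    then have "t \<in> lattice_ideal L" using G in_gen_ideal by blast
    then have "b \<in> Mset L" using lattice_keys[OF lat] ab(2) by blast
    then obtain v' c' where v': "v' \<in> L" "v' \<noteq> (\<lambda>_. 0)" "b = posp v' + c'"
      unfolding Mset_def by blast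
    have w0eq: "w0 = posp v' + (c' + a)" using ab v' by (simp add: ac_simps)
    have "posp v' \<in> D" unfolding D_def using v' v(4) w0eq
      by (intro CollectI bexI[of _ v']) (auto simp: add.assoc)
    then have "deg w0 \<le> deg (posp v')" using w0 by blast
    then have "deg (c' + a) = 0" using w0eq deg_add by (metis add_le_same_cancel1 le_zero_eq)
    then have "c' + a = 0" by (rule deg_zero)
    then have "c' = 0" "a = 0" by (auto simp: poly_mapping_eq_iff lookup_add fun_eq_iff)
    then have "b = w0" using ab v' by simp
    then show "\<exists>g\<in>G. w0 \<in> Poly_Mapping.keys g" using tG ab by blast
  qed
  then show ?thesis using v(3,4) by (metis)
qed

lemma indisp_posp:
  assumes lat: "is_lattice L"
    and ind: "indispensable_monomial (lattice_ideal L :: ('n::finite, 'k::field) mpoly set) w"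
  shows "\<exists>u\<in>L. u \<noteq> (\<lambda>_. 0) \<and> posp u = w"
proof -
  define Gen :: "('n, 'k) mpoly set" where "Gen = {mono (posp u) - mono (negp u) | u. u \<in> L}"
  have bin: "\<forall>g\<in>Gen - {0}. is_binomial g"
  proof
    fix g assume "g \<in> Gen - {0}"
    then obtain u where u: "u \<in> L" "g = mono (posp u) - mono (negp u)" "g \<noteq> 0"
      unfolding Gen_def by blast
    then have "posp u \<noteq> negp u" by auto
    then show "is_binomial g" unfolding is_binomial_def using u by blast
  qed
  have "gen_ideal (Gen - {0}) = lattice_ideal L"
    by (simp add: gen_ideal_minus0 Gen_def lattice_ideal_def)
  then obtain g where g: "g \<in> Gen - {0}" "w \<in> Poly_Mapping.keys g"
    using ind bin unfolding indispensable_monomial_def by blast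
  then obtain u where u: "u \<in> L" "g = mono (posp u) - mono (negp u)" "g \<noteq> 0"
    unfolding Gen_def by blast
  have un: "u \<noteq> (\<lambda>_. 0)"
  proof
    assume "u = (\<lambda>_. 0)"
    then have "g = 0" using u(2) posp_zero by (metis diff_self)
    then show False using u(3) by simp
  qed
  have "w = posp u \<or> w = negp u" using g(2) u(2) keys_mono_diff by blast
  then show ?thesis
  proof
    assume "w = posp u" then show ?thesis using u un by blast
  next
    assume "w = negp u"
    moreover have "(\<lambda>i. 0 - u i) \<noteq> (\<lambda>_. 0)"
    proof
      assume "(\<lambda>i. 0 - u i) = (\<lambda>_. (0::int))"
      then have "u = (\<lambda>_. 0)" by (metis diff_0 neg_equal_0_iff_equal)
      then show False using un by simp
    qed
    moreover have "posp (\<lambda>i. 0 - u i) = w" unfolding calculation(1) negp_posp by (rule refl)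
    ultimately show ?thesis using lattice_neg[OF lat u(1)] by (intro bexI[of _ "\<lambda>i. 0 - u i"] conjI)
  qed
qed


lemma negp_nonzero:
  assumes "\<forall>u\<in>L. (\<forall>i. u i \<ge> 0) \<longrightarrow> u = (\<lambda>_. 0)" "u \<in> L" "u \<noteq> (\<lambda>_. 0)"
  shows "negp u \<noteq> 0"
proof
  assume "negp u = 0"
  then have "\<forall>i. Poly_Mapping.lookup (negp u) i = 0" by simp
  then have "\<forall>i. u i \<ge> 0" by simp
  then show False using assms by blast
qed

lemma keys_posp_negp_disj: "i \<in> Poly_Mapping.keys (posp u) \<Longrightarrow> i \<notin> Poly_Mapping.keys (negp u)"
  by (simp add: in_keys_iff)

theorem corollary2p11:
  fixes L :: "('n::finite \<Rightarrow> int) set"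
    and a :: "'n \<Rightarrow> 'd::finite \<Rightarrow> int"
    and F :: "nat \<Rightarrow> ('n, 'k::field) mpoly"
    and s :: nat
  assumes "is_lattice L" and "L \<noteq> {\<lambda>_. 0}"
    and "\<forall>u\<in>L. (\<forall>i. u i \<ge> 0) \<longrightarrow> u = (\<lambda>_. 0)"
    and "Sat L = kerA a"
    and "\<forall>i<s. A_homogeneous a (F i) \<and> F i \<in> lattice_ideal L"
    and "rad (lattice_ideal L) = rad (gen_ideal (F ` {..<s}))"
  shows "\<Union>(\<Union>i<s. Gamma_F a L (F i)) = Tmin (lattice_ideal L :: ('n, 'k) mpoly set) \<and>
         (\<forall>i<s. \<exists>V\<in>Gamma a L TYPE('k). Gamma_F a L (F i) = Pow V)"
proof
  note lat = assms(1) and pos = assms(3) and hom = assms(5) and rd = assms(6)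
  let ?I = "lattice_ideal L :: ('n, 'k) mpoly set"
  show "\<Union>(\<Union>i<s. Gamma_F a L (F i)) = Tmin ?I"
  proof
    show "\<Union>(\<Union>i<s. Gamma_F a L (F i)) \<subseteq> Tmin ?I"
      unfolding Gamma_F_def Gamma_def by blast
  next
    show "Tmin ?I \<subseteq> \<Union>(\<Union>i<s. Gamma_F a L (F i))"
    proof
      fix E assume E: "E \<in> Tmin ?I"
      then obtain w where w: "indispensable_monomial ?I w" "Poly_Mapping.keys w = E"
        and minE: "\<not> (\<exists>w'. indispensable_monomial ?I w' \<and> Poly_Mapping.keys w' \<subset> E)"
        unfolding Tmin_def by blast
      obtain u where u: "u \<in> L" "u \<noteq> (\<lambda>_. 0)" "posp u = w"
        using indisp_posp[OF lat w(1)] by blast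
      define \<chi> :: "('n \<Rightarrow>\<^sub>0 nat) \<Rightarrow> 'k" where "\<chi> k = (if Poly_Mapping.keys k \<subseteq> E then 1 else 0)" for k
      have mult: "\<And>x y. \<chi> (x + y) = \<chi> x * \<chi> y"
        unfolding \<chi>_def by (simp add: keys_add_nat)
      have chi0: "\<chi> 0 = 1" unfolding \<chi>_def by simp
      define h :: "('n, 'k) mpoly" where "h = mono (posp u) - mono (negp u)"
      have "negp u \<noteq> 0" using negp_nonzero[OF pos u(1,2)] .
      then obtain j where j: "j \<in> Poly_Mapping.keys (negp u)"
        by (metis all_not_in_conv keys_eq_empty)
      then have "j \<notin> E" using keys_posp_negp_disj[of j u] u(3) w(2) by blast
      then have chin: "\<chi> (negp u) = 0" using j unfolding \<chi>_def by auto
      have chip: "\<chi> (posp u) = 1" using u(3) w(2) unfolding \<chi>_def by simp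
      have evh: "ev \<chi> h = 1"
        unfolding h_def mono_def by (simp add: ev_diff ev_single chin chip)
      have "h \<in> ?I" unfolding lattice_ideal_def h_def
        by (rule in_gen_ideal) (use u in blast)
      then have "h \<in> rad ?I" unfolding rad_def by (intro CollectI exI[of _ 1]) simp
      then obtain n where n: "h ^ n \<in> gen_ideal (F ` {..<s})" using rd unfolding rad_def by blast
      have evhn: "ev \<chi> (h ^ n) = 1" by (simp add: ev_power[of \<chi>, OF mult chi0] evh)
      have "\<exists>i<s. ev \<chi> (F i) \<noteq> 0"
      proof (rule ccontr)
        assume "\<not> (\<exists>i<s. ev \<chi> (F i) \<noteq> 0)"
        then have "\<forall>t\<in>F ` {..<s}. ev \<chi> t = 0" by auto
        then have "ev \<chi> (h ^ n) = 0" using ev_gen_ideal[of \<chi>, OF mult _ n] by blast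
        then show False using evhn by simp
      qed
      then obtain i where i: "i < s" "ev \<chi> (F i) \<noteq> 0" by blast
      then obtain b where b: "b \<in> Poly_Mapping.keys (F i)" "Poly_Mapping.lookup (F i) b * \<chi> b \<noteq> 0"
        unfolding ev_def by (meson sum.not_neutral_contains_not_neutral)
      then have bE: "Poly_Mapping.keys b \<subseteq> E" unfolding \<chi>_def by (auto split: if_splits)
      have "F i \<in> ?I" using hom i(1) by blast
      then have "b \<in> Mset L" using lattice_keys[OF lat] b(1) by blast
      then obtain v c where v: "v \<in> L" "v \<noteq> (\<lambda>_. 0)" "b = posp v + c"
        unfolding Mset_def by blast
      obtain w' c' where w': "indispensable_monomial ?I w'" "posp v = w' + c'"
        using lemmaB[OF lat v(1,2)] by blast
      have "Poly_Mapping.keys w' \<subseteq> Poly_Mapping.keys b" using v(3) w'(2) by (auto simp: keys_add_nat)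
      then have "Poly_Mapping.keys w' = E" using bE minE w'(1) by blast
      then have kb: "Poly_Mapping.keys b = E"
        using \<open>Poly_Mapping.keys w' \<subseteq> Poly_Mapping.keys b\<close> bE by blast
      have "{E} \<in> Gamma_F a L (F i)"
        unfolding Gamma_F_def Gamma_def vert_of_def
        using E b(1) kb by (auto intro!: exI[of _ "\<lambda>_. b"])
      then show "E \<in> \<Union>(\<Union>i<s. Gamma_F a L (F i))" using i(1) by blast
    qed
  qed
next
  note hom = assms(5)
  show "\<forall>i<s. \<exists>V\<in>Gamma a L TYPE('k). Gamma_F a L (F i) = Pow V"
  proof (intro allI impI)
    fix i assume i: "i < s"
    define V where "V = vert_of L (F i)"
    define M where "M E = (SOME w. w \<in> Poly_Mapping.keys (F i) \<and> Poly_Mapping.keys w = E)" for E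
    define d where "d = Adeg a (SOME w. w \<in> Poly_Mapping.keys (F i))"
    have hi: "A_homogeneous a (F i)" using hom i by blast
    have M: "Poly_Mapping.keys (M E) = E \<and> Adeg a (M E) = d" if "E \<in> V" for E
    proof -
      have "\<exists>w. w \<in> Poly_Mapping.keys (F i) \<and> Poly_Mapping.keys w = E"
        using that unfolding V_def vert_of_def by blast
      then have ME: "M E \<in> Poly_Mapping.keys (F i) \<and> Poly_Mapping.keys (M E) = E"
        unfolding M_def by (rule someI_ex)
      then have "(SOME w. w \<in> Poly_Mapping.keys (F i)) \<in> Poly_Mapping.keys (F i)"
        by (meson someI_ex)
      then have "Adeg a (M E) = d" unfolding d_def using hi ME unfolding A_homogeneous_def by blast
      then show ?thesis using ME by blast
    qed
    have VT: "V \<subseteq> Tmin (lattice_ideal L :: ('n, 'k) mpoly set)"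
      unfolding V_def vert_of_def by blast
    have face: "S \<in> Gamma a L TYPE('k)" if "S \<subseteq> V" for S
      unfolding Gamma_def using that VT M by blast
    show "\<exists>V\<in>Gamma a L TYPE('k). Gamma_F a L (F i) = Pow V"
    proof (intro bexI)
      show "V \<in> Gamma a L TYPE('k)" using face by blast
      show "Gamma_F a L (F i) = Pow V"
        unfolding Gamma_F_def using face V_def by auto
    qed
  qed
qed

end
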